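(* Let $\mathcal E$ be an exchangeability system for a noncommutative probability space $(\mathcal A,\phi)$ and let $(X_{i,j})_{i\in[m],\,j\in[n_i]}\subseteq\mathcal A$, $n=n_1+\dots+n_m$. Then $$K_m\Big(\prod_{j=1}^{n_1}X_{1,j},\prod_{j=1}^{n_2}X_{2,j},\dots,\prod_{j=1}^{n_m}X_{m,j}\Big)=\sum_{\substack{\sigma\in\Pi_n\\ \sigma\ \text{indecomposable}}}K_\sigma(X_{1,1},\dots,X_{1,n_1},X_{2,1},\dots,X_{m,n_m}),$$ where products are taken in increasing order of $j$.
   Context: A noncommutative probability space is a pair $(\mathcal A,\phi)$ of a complex unital algebra $\mathcal A$ and a unital linear functional $\phi$. An exchangeability system $\mathcal E$ for $(\mathcal A,\phi)$ consists of a noncommutative probability space $(\mathcal U,\tilde\phi)$ and a family $(\iota_k)_{k\in\mathbb N}$ of embeddings (injective unital algebra homomorphisms) $\iota_k:\mathcal A\to\mathcal A_k\subseteq\mathcal U$ with $\tilde\phi\circ\iota_k=\phi$; write $X^{(k)}=\iota_k(X)$. It is required that for all $X_1,\dots,X_n\in\mathcal A$, indices $i_1,\dots,i_n\in\mathbb N$ and bijections $\sigma$ of $\mathbb N$, $\tilde\phi(X_1^{(i_1)}\cdots X_n^{(i_n)})=\tilde\phi(X_1^{(\sigma(i_1))}\cdots X_n^{(\sigma(i_n))})$; this value depends only on the kernel of $j\mapsto i_j$ and for a partition $\pi$ is denoted $\phi_\pi(X_1,\dots,X_n)$. $\Pi_n$ is the lattice of set partitions of $[n]$ under refinement with Möbius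 function $\mu$ and join $\vee$; $K_\pi=\sum_{\sigma\le\pi}\phi_\sigma\,\mu(\sigma,\pi)$, and $K_m(Y_1,\dots,Y_m)=K_{\hat1_m}(Y_1,\dots,Y_m)$ (equivalently $\frac1m\tilde\phi(Y_1^\omega\cdots Y_m^\omega)$ with $Y^\omega=\sum_{k=1}^m\omega^kY^{(k)}$, $\omega$ a primitive $m$-th root of unity). Identify $[n]$ with $\{(i,j):i\in[m],j\in[n_i]\}$ in lexicographic order. Each $\pi\in\Pi_m$ induces $\tilde\pi\in\Pi_n$ with blocks $\{(i,j):i\in B,j\in[n_i]\}$ for $B\in\pi$. A partition $\sigma\in\Pi_n$ is indecomposable if $\sigma\vee\tilde{\hat0}_m=\tilde{\hat1}_m$, where $\hat0_m,\hat1_m$ are the minimal and maximal elements of $\Pi_m$. *)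

theory Defs
  imports Complex_Main "HOL-Library.Disjoint_Sets"
begin

text \<open>A complex unital algebra is modelled as a type of class ring_1 together with a
  complex scalar multiplication making it a complex vector space, compatible with the
  product.\<close>

locale nc_prob_space =
  fixes scl :: "complex \<Rightarrow> 'a::ring_1 \<Rightarrow> 'a"
    and phi :: "'a \<Rightarrow> complex"
  assumes vs: "vector_space scl"
    and scl_mult_left: "\<And>c x y. scl c (x * y) = scl c x * y"
    and scl_mult_right: "\<And>c x y. scl c (x * y) = x * scl c y"
    and phi_linear: "Vector_Spaces.linear scl (*) phi"
    and phi_unital: "phi 1 = 1"

locale exch_system =
  A: nc_prob_space sclA phi + U: nc_prob_space sclU phiU
  for sclA :: "complex \<Rightarrow> 'a::ring_1 \<Rightarrow> 'a" and phi :: "'a \<Rightarrow> complex"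
    and sclU :: "complex \<Rightarrow> 'u::ring_1 \<Rightarrow> 'u" and phiU :: "'u \<Rightarrow> complex" +
  fixes iota :: "nat \<Rightarrow> 'a \<Rightarrow> 'u"
  assumes iota_inj: "\<And>k. inj (iota k)"
    and iota_linear: "\<And>k. Vector_Spaces.linear sclA sclU (iota k)"
    and iota_mult: "\<And>k x y. iota k (x * y) = iota k x * iota k y"
    and iota_one: "\<And>k. iota k 1 = 1"
    and iota_phi: "\<And>k x. phiU (iota k x) = phi x"
    and exchangeable: "\<And>(Xs :: 'a list) (is :: nat list) (\<sigma> :: nat \<Rightarrow> nat).
        length is = length Xs \<Longrightarrow> bij \<sigma> \<Longrightarrow>
        phiU (prod_list (map2 (\<lambda>x i. iota i x) Xs is))
        = phiU (prod_list (map2 (\<lambda>x i. iota (\<sigma> i) x) Xs is))"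

definition partitions :: "nat \<Rightarrow> nat set set set" where
  "partitions n = {P. partition_on {..<n} P}"

definition refines :: "'b set set \<Rightarrow> 'b set set \<Rightarrow> bool" where
  "refines \<sigma> \<pi> \<longleftrightarrow> (\<forall>B\<in>\<sigma>. \<exists>C\<in>\<pi>. B \<subseteq> C)"

definition hat0 :: "nat \<Rightarrow> nat set set" where
  "hat0 m = (\<lambda>i. {i}) ` {..<m}"

definition hat1 :: "nat \<Rightarrow> nat set set" where
  "hat1 m = {{..<m}}"

definition join_part :: "nat \<Rightarrow> nat set set \<Rightarrow> nat set set \<Rightarrow> nat set set" where
  "join_part n \<sigma> \<pi> = (THE \<rho>. \<rho> \<in> partitions n \<and> refines \<sigma> \<rho> \<and> refines \<pi> \<rho> \<and>
     (\<forall>\<tau>\<in>partitions n. refines \<sigma> \<tau> \<and> refines \<pi> \<tau> \<longrightarrow> refines \<rho> \<tau>))"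

definition moebius_part :: "nat \<Rightarrow> nat set set \<Rightarrow> nat set set \<Rightarrow> int" where
  "moebius_part n = (THE f.
     (\<forall>\<sigma>\<in>partitions n. \<forall>\<pi>\<in>partitions n. refines \<sigma> \<pi> \<longrightarrow>
        (\<Sum>\<rho>\<in>{\<rho>\<in>partitions n. refines \<sigma> \<rho> \<and> refines \<rho> \<pi>}. f \<sigma> \<rho>)
          = (if \<sigma> = \<pi> then 1 else 0)) \<and>
     (\<forall>\<sigma> \<pi>. \<not> (\<sigma> \<in> partitions n \<and> \<pi> \<in> partitions n \<and> refines \<sigma> \<pi>) \<longrightarrow> f \<sigma> \<pi> = 0))"

text \<open>phi_\<pi>(Y_0,...,Y_{n-1}): position j gets the copy labelled by the least element of its
  block of \<pi>, so the kernel of the labelling is exactly \<pi>; by exchangeability the value does not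
  depend on this choice of labels.\<close>
definition phi_part :: "('u::ring_1 \<Rightarrow> complex) \<Rightarrow> (nat \<Rightarrow> 'a \<Rightarrow> 'u) \<Rightarrow> nat set set \<Rightarrow> 'a list \<Rightarrow> complex" where
  "phi_part phiU iota \<pi> Ys =
     phiU (prod_list (map (\<lambda>j. iota (Min (THE B. B \<in> \<pi> \<and> j \<in> B)) (Ys ! j)) [0..<length Ys]))"

definition cum_part :: "('u::ring_1 \<Rightarrow> complex) \<Rightarrow> (nat \<Rightarrow> 'a \<Rightarrow> 'u) \<Rightarrow> nat set set \<Rightarrow> 'a list \<Rightarrow> complex" where
  "cum_part phiU iota \<pi> Ys =
     (\<Sum>\<sigma>\<in>{\<sigma>\<in>partitions (length Ys). refines \<sigma> \<pi>}.
        phi_part phiU iota \<sigma> Ys * of_int (moebius_part (length Ys) \<sigma> \<pi>))"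

definition cum :: "('u::ring_1 \<Rightarrow> complex) \<Rightarrow> (nat \<Rightarrow> 'a \<Rightarrow> 'u) \<Rightarrow> 'a list \<Rightarrow> complex" where
  "cum phiU iota Ys = cum_part phiU iota (hat1 (length Ys)) Ys"

text \<open>Pair (i,j) with i < m, j < n_i (0-based) is identified with position offset i + j,
  i.e. lexicographic order.\<close>
definition offset :: "nat list \<Rightarrow> nat \<Rightarrow> nat" where
  "offset ns i = (\<Sum>k<i. ns ! k)"

definition tilde :: "nat list \<Rightarrow> nat set set \<Rightarrow> nat set set" where
  "tilde ns \<pi> = (\<lambda>B. {offset ns i + j | i j. i \<in> B \<and> j < ns ! i}) ` \<pi>"

definition indecomposable :: "nat list \<Rightarrow> nat set set \<Rightarrow> bool" where
  "indecomposable ns \<sigma> \<longleftrightarrow>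
     join_part (sum_list ns) \<sigma> (tilde ns (hat0 (length ns))) = tilde ns (hat1 (length ns))"

end

theory Submission
  imports Defs
begin

definition ivl :: "'b set \<Rightarrow> ('b \<Rightarrow> 'b \<Rightarrow> bool) \<Rightarrow> 'b \<Rightarrow> 'b \<Rightarrow> 'b set" where
  "ivl S le s p = {r\<in>S. le s r \<and> le r p}"

definition porder :: "'b set \<Rightarrow> ('b \<Rightarrow> 'b \<Rightarrow> bool) \<Rightarrow> bool" where
  "porder S le \<longleftrightarrow> finite S \<and> (\<forall>x\<in>S. le x x) \<and>
     (\<forall>x\<in>S. \<forall>y\<in>S. \<forall>z\<in>S. le x y \<longrightarrow> le y z \<longrightarrow> le x z) \<and>
     (\<forall>x\<in>S. \<forall>y\<in>S. le x y \<longrightarrow> le y x \<longrightarrow> x = y)"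

fun mu_it :: "'b set \<Rightarrow> ('b \<Rightarrow> 'b \<Rightarrow> bool) \<Rightarrow> nat \<Rightarrow> 'b \<Rightarrow> 'b \<Rightarrow> int" where
  "mu_it S le 0 s p = 0"
| "mu_it S le (Suc k) s p = (if s = p then 1 else - (\<Sum>r\<in>ivl S le s p - {p}. mu_it S le k s r))"

lemma po_fin: "porder S le \<Longrightarrow> finite S" unfolding porder_def by blast
lemma po_refl: "porder S le \<Longrightarrow> x \<in> S \<Longrightarrow> le x x" unfolding porder_def by blast
lemma po_trans: "porder S le \<Longrightarrow> le x y \<Longrightarrow> le y z \<Longrightarrow> x \<in> S \<Longrightarrow> y \<in> S \<Longrightarrow> z \<in> S \<Longrightarrow> le x z"
  unfolding porder_def by blast
lemma po_antisym: "porder S le \<Longrightarrow> le x y \<Longrightarrow> le y x \<Longrightarrow> x \<in> S \<Longrightarrow> y \<in> S \<Longrightarrow> x = y"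
  unfolding porder_def by blast

lemma ivl_sub:
  assumes po: "porder S le" and r: "r \<in> ivl S le s p" and "r \<noteq> p" "p \<in> S"
  shows "ivl S le s r \<subseteq> ivl S le s p - {p}"
proof
  fix x assume x: "x \<in> ivl S le s r"
  have rS: "r \<in> S" "le s r" "le r p" using r unfolding ivl_def by auto
  have xS: "x \<in> S" "le s x" "le x r" using x unfolding ivl_def by auto
  have "le x p" using po_trans[OF po xS(3) rS(3) xS(1) rS(1) assms(4)] .
  moreover have "x \<noteq> p" using po_antisym[OF po rS(3), of] xS assms(3,4) rS by blast
  ultimately show "x \<in> ivl S le s p - {p}" using xS unfolding ivl_def by auto
qed

lemma ivl_self: "porder S le \<Longrightarrow> s \<in> S \<Longrightarrow> p \<in> S \<Longrightarrow> le s p \<Longrightarrow> s \<in> ivl S le s p \<and> p \<in> ivl S le s p"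
  unfolding ivl_def using po_refl by fastforce

lemma ivl_finite: assumes "porder S le" shows "finite (ivl S le s p)"
  using po_fin[OF assms] unfolding ivl_def by auto

lemma ivl_card_less:
  assumes po: "porder S le" and r: "r \<in> ivl S le s p" and "r \<noteq> p" "p \<in> S" and sS: "s \<in> S"
  shows "card (ivl S le s r) < card (ivl S le s p)"
proof -
  have f: "finite (ivl S le s p)" using ivl_finite[OF po] .
  have "r \<in> S" "le s r" "le r p" using r unfolding ivl_def by auto
  then have "le s p" using po_trans[OF po _ _ sS _ assms(4)] by blast
  then have "p \<in> ivl S le s p" using po_refl[OF po] assms(4) unfolding ivl_def by simp
  then have "ivl S le s p - {p} \<subset> ivl S le s p" by auto
  then have "card (ivl S le s p - {p}) < card (ivl S le s p)" using f by (meson psubset_card_mono)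
  moreover have "card (ivl S le s r) \<le> card (ivl S le s p - {p})"
    using ivl_sub[OF assms(1-4)] f by (meson card_mono finite_Diff)
  ultimately show ?thesis by linarith
qed

lemma mu_it_stable:
  assumes po: "porder S le"
  shows "s \<in> S \<Longrightarrow> p \<in> S \<Longrightarrow> le s p \<Longrightarrow> card (ivl S le s p) \<le> k \<Longrightarrow> card (ivl S le s p) \<le> k'
     \<Longrightarrow> mu_it S le k s p = mu_it S le k' s p"
proof (induction "card (ivl S le s p)" arbitrary: p k k' rule: less_induct)
  case less
  have c1: "card (ivl S le s p) \<ge> 1"
    using ivl_self[OF po less.prems(1-3)] ivl_finite[OF po]
    by (metis One_nat_def Suc_leI card_gt_0_iff empty_iff)
  obtain k1 where k1: "k = Suc k1" using less.prems(4) c1 by (cases k) auto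
  obtain k1' where k1': "k' = Suc k1'" using less.prems(5) c1 by (cases k') auto
  have "mu_it S le k1 s r = mu_it S le k1' s r" if r: "r \<in> ivl S le s p - {p}" for r
  proof -
    have lt: "card (ivl S le s r) < card (ivl S le s p)"
      using ivl_card_less[OF po, of r s p] r less.prems by auto
    have "r \<in> S" "le s r" using r unfolding ivl_def by auto
    then show ?thesis using less.hyps[OF lt] lt less.prems k1 k1' by auto
  qed
  then show ?case using k1 k1' by (auto intro: sum.cong)
qed

definition mu :: "'b set \<Rightarrow> ('b \<Rightarrow> 'b \<Rightarrow> bool) \<Rightarrow> 'b \<Rightarrow> 'b \<Rightarrow> int" where
  "mu S le s p = (if s \<in> S \<and> p \<in> S \<and> le s p then mu_it S le (card S) s p else 0)"

lemma card_ivl_le: "porder S le \<Longrightarrow> card (ivl S le s p) \<le> card S"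
  unfolding ivl_def using po_fin by (auto intro: card_mono)

lemma mu_prop:
  assumes po: "porder S le" and sp: "s \<in> S" "p \<in> S" "le s p"
  shows "(\<Sum>r\<in>ivl S le s p. mu S le s r) = (if s = p then 1 else 0)"
proof -
  have eq: "mu S le s r = mu_it S le (card S) s r" if "r \<in> ivl S le s p" for r
    using that sp unfolding mu_def ivl_def by auto
  have st: "mu_it S le (Suc (card S)) s p = mu_it S le (card S) s p"
    using mu_it_stable[OF po sp] card_ivl_le[OF po] by (meson le_Suc_eq)
  have pin: "p \<in> ivl S le s p" using ivl_self[OF po sp] by auto
  have "(\<Sum>r\<in>ivl S le s p. mu S le s r) = (\<Sum>r\<in>ivl S le s p. mu_it S le (card S) s r)"
    using eq by (rule sum.cong[OF refl])
  also have "\<dots> = mu_it S le (card S) s p + (\<Sum>r\<in>ivl S le s p - {p}. mu_it S le (card S) s r)"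
    using pin ivl_finite[OF po] by (simp add: sum.remove)
  finally have *: "(\<Sum>r\<in>ivl S le s p. mu S le s r) = \<dots>" .
  show ?thesis
  proof (cases "s = p")
    case True
    have "ivl S le s p = {p}"
    proof
      show "ivl S le s p \<subseteq> {p}"
      proof
        fix x assume "x \<in> ivl S le s p"
        then have "x \<in> S" "le p x" "le x p" using True unfolding ivl_def by auto
        then show "x \<in> {p}" using po_antisym[OF po, of x p] sp by simp
      qed
      show "{p} \<subseteq> ivl S le s p" using pin by simp
    qed
    have "card S > 0" using po_fin[OF po] sp card_gt_0_iff by blast
    then obtain k where "card S = Suc k" by (cases "card S") auto
    then show ?thesis using True eq \<open>ivl S le s p = {p}\<close> by simp
  next
    case False
    then show ?thesis using * st by simp
  qed
qed

lemma mu_zero: "\<not> (s \<in> S \<and> p \<in> S \<and> le s p) \<Longrightarrow> mu S le s p = 0"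
  unfolding mu_def by auto

lemma mu_unique:
  assumes po: "porder S le"
    and f: "\<forall>s\<in>S. \<forall>p\<in>S. le s p \<longrightarrow> (\<Sum>r\<in>ivl S le s p. f s r) = (if s = p then 1 else (0::int))"
    and g: "\<forall>s\<in>S. \<forall>p\<in>S. le s p \<longrightarrow> (\<Sum>r\<in>ivl S le s p. g s r) = (if s = p then 1 else (0::int))"
  shows "s \<in> S \<Longrightarrow> p \<in> S \<Longrightarrow> le s p \<Longrightarrow> f s p = g s p"
proof (induction "card (ivl S le s p)" arbitrary: p rule: less_induct)
  case less
  have pin: "p \<in> ivl S le s p" using ivl_self[OF po less.prems] by auto
  have fin: "finite (ivl S le s p)" using ivl_finite[OF po] .
  have IH: "f s r = g s r" if r: "r \<in> ivl S le s p - {p}" for r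
  proof -
    have lt: "card (ivl S le s r) < card (ivl S le s p)"
      using ivl_card_less[OF po, of r s p] r less.prems by auto
    have "r \<in> S" "le s r" using r unfolding ivl_def by auto
    then show ?thesis using less.hyps[OF lt] less.prems by auto
  qed
  have "f s p + (\<Sum>r\<in>ivl S le s p - {p}. f s r) = g s p + (\<Sum>r\<in>ivl S le s p - {p}. g s r)"
    using f g less.prems pin fin by (simp add: sum.remove[symmetric])
  moreover have "(\<Sum>r\<in>ivl S le s p - {p}. f s r) = (\<Sum>r\<in>ivl S le s p - {p}. g s r)"
    using IH by (rule sum.cong[OF refl])
  ultimately show ?case by simp
qed

lemma zeta_inv:
  fixes phi :: "'b \<Rightarrow> complex"
  assumes po: "porder S le" and p: "p \<in> S"
    and M: "\<forall>s\<in>S. \<forall>p\<in>S. le s p \<longrightarrow> (\<Sum>r\<in>ivl S le s p. M s r) = (if s = p then 1 else (0::int))"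
  shows "(\<Sum>s\<in>{s\<in>S. le s p}. \<Sum>t\<in>{t\<in>S. le t s}. phi t * of_int (M t s)) = phi p"
proof -
  let ?L = "{s\<in>S. le s p}"
  have fin: "finite ?L" using po_fin[OF po] by auto
  have "(\<Sum>s\<in>?L. \<Sum>t\<in>{t\<in>S. le t s}. phi t * of_int (M t s))
      = (\<Sum>s\<in>?L. \<Sum>t\<in>{t\<in>?L. le t s}. phi t * of_int (M t s))"
  proof (rule sum.cong[OF refl])
    fix s assume "s \<in> ?L"
    then have sS: "s \<in> S" "le s p" by auto
    have "le t p" if "t \<in> S" "le t s" for t using po_trans[OF po that(2) sS(2) that(1) sS(1) p] .
    then have "{t\<in>S. le t s} = {t\<in>?L. le t s}" by auto
    then show "(\<Sum>t\<in>{t\<in>S. le t s}. phi t * of_int (M t s)) = (\<Sum>t\<in>{t\<in>?L. le t s}. phi t * of_int (M t s))"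
      by simp
  qed
  also have "\<dots> = (\<Sum>t\<in>?L. \<Sum>s\<in>{s\<in>?L. le t s}. phi t * of_int (M t s))"
    using sum.swap_restrict[OF fin fin, of "\<lambda>s t. phi t * of_int (M t s)" "\<lambda>s t. le t s"] by simp
  also have "\<dots> = (\<Sum>t\<in>?L. phi t * of_int (\<Sum>s\<in>ivl S le t p. M t s))"
  proof (rule sum.cong[OF refl])
    fix t assume "t \<in> ?L"
    have "{s\<in>?L. le t s} = ivl S le t p" unfolding ivl_def by auto
    then show "(\<Sum>s\<in>{s\<in>?L. le t s}. phi t * of_int (M t s)) = phi t * of_int (\<Sum>s\<in>ivl S le t p. M t s)"
      by (simp add: sum_distrib_left)
  qed
  also have "\<dots> = (\<Sum>t\<in>?L. if t = p then phi t else 0)"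
    using M p by (intro sum.cong[OF refl]) auto
  also have "\<dots> = phi p" using fin p po_refl[OF po] by (simp add: sum.delta')
  finally show ?thesis .
qed

lemma zeta_unique:
  fixes a b :: "'b \<Rightarrow> complex"
  assumes po: "porder S le"
    and H: "\<forall>p\<in>S. (\<Sum>s\<in>{s\<in>S. le s p}. a s) = (\<Sum>s\<in>{s\<in>S. le s p}. b s)"
  shows "p \<in> S \<Longrightarrow> a p = b p"
proof (induction "card {s\<in>S. le s p}" arbitrary: p rule: less_induct)
  case less
  let ?L = "{s\<in>S. le s p}"
  have fin: "finite ?L" using po_fin[OF po] by auto
  have pin: "p \<in> ?L" using po_refl[OF po] less.prems by auto
  have IH: "a s = b s" if s: "s \<in> ?L - {p}" for s
  proof -
    have sS: "s \<in> S" "le s p" "s \<noteq> p" using s by auto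
    have "{t\<in>S. le t s} \<subseteq> ?L - {p}"
    proof
      fix t assume t: "t \<in> {t\<in>S. le t s}"
      then have tS: "t \<in> S" "le t s" by auto
      have "le t p" using po_trans[OF po tS(2) sS(2) tS(1) sS(1) less.prems] .
      moreover have "t \<noteq> p" using po_antisym[OF po sS(2), of] tS sS less.prems by blast
      ultimately show "t \<in> ?L - {p}" using tS by auto
    qed
    then have lt: "card {t\<in>S. le t s} < card ?L"
      by (metis (no_types, lifting) card_Diff1_less card_mono dual_order.strict_trans2 fin finite_Diff pin)
    then show ?thesis using less.hyps[OF lt] s by auto
  qed
  have "a p + (\<Sum>s\<in>?L - {p}. a s) = b p + (\<Sum>s\<in>?L - {p}. b s)"
    using H less.prems pin fin by (simp add: sum.remove[symmetric])
  moreover have "(\<Sum>s\<in>?L - {p}. a s) = (\<Sum>s\<in>?L - {p}. b s)"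
    using IH by (rule sum.cong[OF refl])
  ultimately show ?case by simp
qed


lemma part_same: "partition_on A P \<Longrightarrow> C \<in> P \<Longrightarrow> C' \<in> P \<Longrightarrow> x \<in> C \<Longrightarrow> x \<in> C' \<Longrightarrow> C = C'"
  using partition_onD2 disjointD by fastforce

lemma part_sub: "partition_on A P \<Longrightarrow> C \<in> P \<Longrightarrow> C \<subseteq> A"
  using partition_onD1 by blast

lemma part_ne: "partition_on A P \<Longrightarrow> C \<in> P \<Longrightarrow> C \<noteq> {}"
  using partition_onD3 by blast

lemma part_cover: "partition_on A P \<Longrightarrow> x \<in> A \<Longrightarrow> \<exists>C\<in>P. x \<in> C"
  using partition_onD1 by blast

definition blk :: "'b set set \<Rightarrow> 'b \<Rightarrow> 'b set" where
  "blk P x = (THE B. B \<in> P \<and> x \<in> B)"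

lemma blk_eq: assumes "partition_on A P" "C \<in> P" "x \<in> C" shows "blk P x = C"
  unfolding blk_def
proof (rule the_equality)
  show "C \<in> P \<and> x \<in> C" using assms by simp
  fix B assume "B \<in> P \<and> x \<in> B" then show "B = C" using part_same[OF assms(1)] assms by blast
qed

lemma blk_mem: assumes "partition_on A P" "x \<in> A" shows "blk P x \<in> P" "x \<in> blk P x"
proof -
  obtain C where "C \<in> P" "x \<in> C" using part_cover[OF assms] by blast
  then show "blk P x \<in> P" "x \<in> blk P x" using blk_eq[OF assms(1)] by auto
qed

lemma refines_antisym:
  assumes P: "partition_on A P" and Q: "partition_on A Q" and PQ: "refines P Q" and QP: "refines Q P"
  shows "P = Q"
proof -
  have sub: "P' \<subseteq> Q'" if P': "partition_on A P'" and Q': "partition_on A Q'"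
      and a: "refines P' Q'" and b: "refines Q' P'" for P' Q'
  proof
    fix B assume B: "B \<in> P'"
    obtain C where C: "C \<in> Q'" "B \<subseteq> C" using a B unfolding refines_def by blast
    obtain B' where B': "B' \<in> P'" "C \<subseteq> B'" using b C unfolding refines_def by blast
    obtain x where x: "x \<in> B" using part_ne[OF P' B] by blast
    have "B = B'" using part_same[OF P' B B'(1) x] B' C x by blast
    then have "B = C" using B' C by blast
    then show "B \<in> Q'" using C by simp
  qed
  show ?thesis using sub[OF P Q PQ QP] sub[OF Q P QP PQ] by blast
qed

lemma refines_refl': "refines P P" unfolding refines_def by blast

lemma refines_trans': "refines P Q \<Longrightarrow> refines Q R \<Longrightarrow> refines P R"
  unfolding refines_def by (meson order_trans)

lemma finite_partitions: "finite (partitions k)"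
proof -
  have "partitions k \<subseteq> Pow (Pow {..<k})"
    unfolding partitions_def using part_sub by blast
  then show ?thesis by (rule finite_subset) simp
qed

lemma porder_partitions: "porder (partitions k) refines"
  unfolding porder_def
proof (intro conjI ballI impI)
  show "finite (partitions k)" by (rule finite_partitions)
next
  fix x show "refines x x" by (rule refines_refl')
next
  fix x y z assume "refines x y" "refines y z" then show "refines x z" by (rule refines_trans')
next
  fix x y assume "x \<in> partitions k" "y \<in> partitions k" "refines x y" "refines y x"
  then show "x = y" using refines_antisym unfolding partitions_def by blast
qed

lemma moebius_eq: "moebius_part k = mu (partitions k) refines"
  unfolding moebius_part_def
proof (rule the_equality)
  let ?S = "partitions k"
  have po: "porder ?S refines" by (rule porder_partitions)
  show "(\<forall>\<sigma>\<in>?S. \<forall>\<pi>\<in>?S. refines \<sigma> \<pi> \<longrightarrow>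
        (\<Sum>\<rho>\<in>{\<rho>\<in>?S. refines \<sigma> \<rho> \<and> refines \<rho> \<pi>}. mu ?S refines \<sigma> \<rho>) = (if \<sigma> = \<pi> then 1 else 0)) \<and>
     (\<forall>\<sigma> \<pi>. \<not> (\<sigma> \<in> ?S \<and> \<pi> \<in> ?S \<and> refines \<sigma> \<pi>) \<longrightarrow> mu ?S refines \<sigma> \<pi> = 0)"
  proof (intro conjI ballI impI allI)
    fix \<sigma> \<pi> assume "\<sigma> \<in> ?S" "\<pi> \<in> ?S" "refines \<sigma> \<pi>"
    then show "(\<Sum>\<rho>\<in>{\<rho>\<in>?S. refines \<sigma> \<rho> \<and> refines \<rho> \<pi>}. mu ?S refines \<sigma> \<rho>) = (if \<sigma> = \<pi> then 1 else 0)"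
      using mu_prop[OF po] unfolding ivl_def by simp
  next
    fix \<sigma> \<pi> assume "\<not> (\<sigma> \<in> ?S \<and> \<pi> \<in> ?S \<and> refines \<sigma> \<pi>)"
    then show "mu ?S refines \<sigma> \<pi> = 0" by (rule mu_zero)
  qed
  fix f :: "nat set set \<Rightarrow> nat set set \<Rightarrow> int" assume f: "(\<forall>\<sigma>\<in>?S. \<forall>\<pi>\<in>?S. refines \<sigma> \<pi> \<longrightarrow>
        (\<Sum>\<rho>\<in>{\<rho>\<in>?S. refines \<sigma> \<rho> \<and> refines \<rho> \<pi>}. f \<sigma> \<rho>) = (if \<sigma> = \<pi> then 1 else 0)) \<and>
     (\<forall>\<sigma> \<pi>. \<not> (\<sigma> \<in> ?S \<and> \<pi> \<in> ?S \<and> refines \<sigma> \<pi>) \<longrightarrow> f \<sigma> \<pi> = 0)"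
  have fp: "\<forall>s\<in>?S. \<forall>p\<in>?S. refines s p \<longrightarrow> (\<Sum>r\<in>ivl ?S refines s p. f s r) = (if s = p then 1 else (0::int))"
    using conjunct1[OF f] unfolding ivl_def by simp
  have mp: "\<forall>s\<in>?S. \<forall>p\<in>?S. refines s p \<longrightarrow> (\<Sum>r\<in>ivl ?S refines s p. mu ?S refines s r) = (if s = p then 1 else (0::int))"
    using mu_prop[OF po] by simp
  show "f = mu ?S refines"
  proof (intro ext)
    fix s p
    show "f s p = mu ?S refines s p"
    proof (cases "s \<in> ?S \<and> p \<in> ?S \<and> refines s p")
      case True
      then show ?thesis using mu_unique[OF po fp mp] by simp
    next
      case False
      then show ?thesis using conjunct2[OF f] mu_zero[where s=s and p=p and S="partitions k" and le=refines, OF False] by simp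
    qed
  qed
qed

lemma moebius_prop:
  "\<forall>s\<in>partitions k. \<forall>p\<in>partitions k. refines s p \<longrightarrow>
     (\<Sum>r\<in>ivl (partitions k) refines s p. moebius_part k s r) = (if s = p then 1 else (0::int))"
  unfolding moebius_eq using mu_prop[OF porder_partitions] by simp

lemma cum_zeta:
  assumes p: "p \<in> partitions (length Ys)"
  shows "(\<Sum>s\<in>{s\<in>partitions (length Ys). refines s p}. cum_part phiU iota s Ys) = phi_part phiU iota p Ys"
  unfolding cum_part_def
  using zeta_inv[OF porder_partitions p moebius_prop, of "\<lambda>t. phi_part phiU iota t Ys"] by simp


definition pull :: "('a \<Rightarrow> 'b) \<Rightarrow> 'a set \<Rightarrow> 'b set \<Rightarrow> 'a set" where
  "pull r A C = {x\<in>A. r x \<in> C}"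

definition pullP :: "('a \<Rightarrow> 'b) \<Rightarrow> 'a set \<Rightarrow> 'b set set \<Rightarrow> 'a set set" where
  "pullP r A P = pull r A ` P"

lemma partition_pull:
  assumes P: "partition_on B P" and r: "r ` A = B"
  shows "partition_on A (pullP r A P)"
proof (rule partition_onI)
  show "\<Union>(pullP r A P) = A"
  proof
    show "\<Union>(pullP r A P) \<subseteq> A" unfolding pullP_def pull_def by blast
    show "A \<subseteq> \<Union>(pullP r A P)"
    proof
      fix x assume x: "x \<in> A"
      then have "r x \<in> B" using r by blast
      then obtain C where C: "C \<in> P" "r x \<in> C" using part_cover[OF P] by blast
      then have "x \<in> pull r A C" using x unfolding pull_def by simp
      then show "x \<in> \<Union>(pullP r A P)" using C unfolding pullP_def by blast
    qed
  qed
next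
  fix p q assume p: "p \<in> pullP r A P" and q: "q \<in> pullP r A P" and pq: "p \<noteq> q"
  obtain C where C: "C \<in> P" "p = pull r A C" using p unfolding pullP_def by blast
  obtain D where D: "D \<in> P" "q = pull r A D" using q unfolding pullP_def by blast
  have "C \<noteq> D" using pq C D by blast
  show "disjnt p q"
  proof (rule ccontr)
    assume "\<not> disjnt p q"
    then obtain x where "x \<in> p" "x \<in> q" unfolding disjnt_def by blast
    then have "r x \<in> C" "r x \<in> D" using C D unfolding pull_def by auto
    then show False using part_same[OF P C(1) D(1)] \<open>C \<noteq> D\<close> by blast
  qed
next
  show "{} \<notin> pullP r A P"
  proof
    assume "{} \<in> pullP r A P"
    then obtain C where C: "C \<in> P" "pull r A C = {}" unfolding pullP_def by blast
    obtain c where c: "c \<in> C" using part_ne[OF P C(1)] by blast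
    then have "c \<in> B" using part_sub[OF P C(1)] by blast
    then obtain x where "x \<in> A" "r x = c" using r by blast
    then have "x \<in> pull r A C" using c unfolding pull_def by simp
    then show False using C by blast
  qed
qed

lemma pull_mono_rev:
  assumes r: "r ` A = B" and C: "C \<subseteq> B" and sub: "pull r A C \<subseteq> pull r A D"
  shows "C \<subseteq> D"
proof
  fix c assume c: "c \<in> C"
  then obtain x where "x \<in> A" "r x = c" using r C by blast
  then have "x \<in> pull r A C" using c unfolding pull_def by simp
  then have "x \<in> pull r A D" using sub by blast
  then show "c \<in> D" using \<open>r x = c\<close> unfolding pull_def by simp
qed

lemma refines_pull_iff:
  assumes P: "partition_on B P" and r: "r ` A = B"
  shows "refines (pullP r A P) (pullP r A Q) \<longleftrightarrow> refines P Q"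
proof
  assume H: "refines (pullP r A P) (pullP r A Q)"
  show "refines P Q" unfolding refines_def
  proof
    fix C assume C: "C \<in> P"
    then have "pull r A C \<in> pullP r A P" unfolding pullP_def by blast
    then obtain E where E: "E \<in> pullP r A Q" "pull r A C \<subseteq> E" using H unfolding refines_def by blast
    then obtain D where D: "D \<in> Q" "E = pull r A D" unfolding pullP_def by blast
    have "C \<subseteq> D" using pull_mono_rev[OF r part_sub[OF P C]] E D by blast
    then show "\<exists>D\<in>Q. C \<subseteq> D" using D by blast
  qed
next
  assume H: "refines P Q"
  show "refines (pullP r A P) (pullP r A Q)" unfolding refines_def
  proof
    fix E assume "E \<in> pullP r A P"
    then obtain C where C: "C \<in> P" "E = pull r A C" unfolding pullP_def by blast
    then obtain D where D: "D \<in> Q" "C \<subseteq> D" using H unfolding refines_def by blast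
    have "pull r A C \<subseteq> pull r A D" using D unfolding pull_def by blast
    moreover have "pull r A D \<in> pullP r A Q" using D unfolding pullP_def by blast
    ultimately show "\<exists>F\<in>pullP r A Q. E \<subseteq> F" using C by blast
  qed
qed

lemma pullP_inj:
  assumes P: "partition_on B P" and Q: "partition_on B Q" and r: "r ` A = B"
    and eq: "pullP r A P = pullP r A Q"
  shows "P = Q"
proof -
  have "refines (pullP r A P) (pullP r A Q)" using eq refines_refl'[of "pullP r A Q"] by simp
  then have "refines P Q" using refines_pull_iff[OF P r, of Q] by simp
  moreover have "refines (pullP r A Q) (pullP r A P)" using eq refines_refl'[of "pullP r A Q"] by simp
  then have "refines Q P" using refines_pull_iff[OF Q r, of P] by simp
  ultimately show ?thesis using refines_antisym[OF P Q] by blast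
qed

lemma pull_surj:
  assumes T: "partition_on A \<theta>" and r: "r ` A = B"
    and H: "refines (pullP r A ((\<lambda>b. {b}) ` B)) \<theta>"
  shows "\<exists>P. partition_on B P \<and> \<theta> = pullP r A P"
proof -
  have fib: "\<And>b. b \<in> B \<Longrightarrow> \<exists>T\<in>\<theta>. pull r A {b} \<subseteq> T"
    using H unfolding refines_def pullP_def by blast
  have sat: "pull r A (r ` T) = T" if TT: "T \<in> \<theta>" for T
  proof
    show "T \<subseteq> pull r A (r ` T)" using part_sub[OF T TT] unfolding pull_def by blast
    show "pull r A (r ` T) \<subseteq> T"
    proof
      fix x assume "x \<in> pull r A (r ` T)"
      then obtain y where y: "y \<in> T" "r x = r y" "x \<in> A" unfolding pull_def by blast
      have "r y \<in> B" using y part_sub[OF T TT] r by blast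
      then obtain T' where T': "T' \<in> \<theta>" "pull r A {r y} \<subseteq> T'" using fib by blast
      have "y \<in> pull r A {r y}" "x \<in> pull r A {r y}" using y part_sub[OF T TT] unfolding pull_def by auto
      then have "T' = T" using part_same[OF T T'(1) TT, of y] T' y by blast
      then show "x \<in> T" using T' \<open>x \<in> pull r A {r y}\<close> by blast
    qed
  qed
  let ?P = "(\<lambda>T. r ` T) ` \<theta>"
  have "partition_on B ?P"
  proof (rule partition_onI)
    show "\<Union>?P = B" using partition_onD1[OF T] r by blast
  next
    fix p q assume p: "p \<in> ?P" and q: "q \<in> ?P" and pq: "p \<noteq> q"
    obtain T1 where T1: "T1 \<in> \<theta>" "p = r ` T1" using p by blast
    obtain T2 where T2: "T2 \<in> \<theta>" "q = r ` T2" using q by blast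
    show "disjnt p q"
    proof (rule ccontr)
      assume "\<not> disjnt p q"
      then obtain b where "b \<in> p" "b \<in> q" unfolding disjnt_def by blast
      then have "b \<in> r ` T1" "b \<in> r ` T2" using T1 T2 by simp_all
      then obtain x1 x2 where x: "x1 \<in> T1" "x2 \<in> T2" "r x1 = b" "r x2 = b" by (metis imageE)
      have "r x1 \<in> r ` T2" using x by (metis imageI)
      then have "x1 \<in> pull r A (r ` T2)" using x part_sub[OF T T1(1)] unfolding pull_def by auto
      then have "x1 \<in> T2" using sat[OF T2(1)] by simp
      then have "T1 = T2" using part_same[OF T T1(1) T2(1) x(1)] by simp
      then show False using pq T1 T2 by simp
    qed
  next
    show "{} \<notin> ?P" using partition_onD3[OF T] by blast
  qed
  moreover have "\<theta> = pullP r A ?P"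
  proof -
    have "pullP r A ?P = (\<lambda>T. pull r A (r ` T)) ` \<theta>" unfolding pullP_def by (simp add: image_image)
    also have "\<dots> = \<theta>" using sat by simp
    finally show ?thesis by simp
  qed
  ultimately show ?thesis by blast
qed

lemma pull_meet:
  assumes T: "partition_on A \<tau>" and r: "r ` A = B"
  shows "\<exists>\<rho>. partition_on B \<rho> \<and> refines \<tau> (pullP r A \<rho>) \<and>
    (\<forall>P. partition_on B P \<and> refines \<tau> (pullP r A P) \<longrightarrow> refines \<rho> P)"
proof -
  define U where "U = {P. partition_on B P \<and> refines \<tau> (pullP r A P)}"
  define E where "E = {(b, b'). b \<in> B \<and> b' \<in> B \<and> (\<forall>P\<in>U. \<exists>C\<in>P. b \<in> C \<and> b' \<in> C)}"
  have eq: "equiv B E"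
  proof (rule equivI)
    show "E \<subseteq> B \<times> B" unfolding E_def by auto
    show "refl_on B E"
    proof (rule refl_onI)
      fix x assume x: "x \<in> B"
      have "\<exists>C\<in>P. x \<in> C \<and> x \<in> C" if "P \<in> U" for P
        using part_cover[of B P x] that x unfolding U_def by auto
      then show "(x, x) \<in> E" unfolding E_def using x by auto
    qed
    show "sym E" unfolding sym_def E_def by blast
    show "trans E" unfolding trans_def
    proof (intro allI impI)
      fix x y z assume xy: "(x, y) \<in> E" and yz: "(y, z) \<in> E"
      have "\<exists>C\<in>P. x \<in> C \<and> z \<in> C" if PU: "P \<in> U" for P
      proof -
        obtain C where C: "C \<in> P" "x \<in> C" "y \<in> C" using xy PU unfolding E_def by blast
        obtain D where D: "D \<in> P" "y \<in> D" "z \<in> D" using yz PU unfolding E_def by blast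
        have "partition_on B P" using PU unfolding U_def by blast
        then have "C = D" using part_same C D by metis
        then show ?thesis using C D by blast
      qed
      then show "(x, z) \<in> E" using xy yz unfolding E_def by blast
    qed
  qed
  let ?\<rho> = "B // E"
  have part: "partition_on B ?\<rho>" by (rule partition_on_quotient[OF eq])
  have ref: "refines \<tau> (pullP r A ?\<rho>)" unfolding refines_def
  proof
    fix T0 assume T0: "T0 \<in> \<tau>"
    obtain t where t: "t \<in> T0" using part_ne[OF T T0] by blast
    have tA: "t \<in> A" using t part_sub[OF T T0] by blast
    have rtB: "r t \<in> B" using tA r by blast
    have "T0 \<subseteq> pull r A (E `` {r t})"
    proof
      fix t' assume t': "t' \<in> T0"
      have t'A: "t' \<in> A" using t' part_sub[OF T T0] by blast
      have "\<exists>C\<in>P. r t \<in> C \<and> r t' \<in> C" if PU: "P \<in> U" for P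
      proof -
        have "refines \<tau> (pullP r A P)" using PU unfolding U_def by blast
        then obtain F where F: "F \<in> pullP r A P" "T0 \<subseteq> F" using T0 unfolding refines_def by blast
        then obtain C where C: "C \<in> P" "F = pull r A C" unfolding pullP_def by blast
        then show ?thesis using F t t' unfolding pull_def by blast
      qed
      then have "(r t, r t') \<in> E" using rtB t'A r unfolding E_def by blast
      then show "t' \<in> pull r A (E `` {r t})" using t'A unfolding pull_def by blast
    qed
    moreover have "pull r A (E `` {r t}) \<in> pullP r A ?\<rho>"
      unfolding pullP_def using rtB by (simp add: quotientI)
    ultimately show "\<exists>F\<in>pullP r A ?\<rho>. T0 \<subseteq> F" by blast
  qed
  have least: "refines ?\<rho> P" if P: "partition_on B P" and PT: "refines \<tau> (pullP r A P)" for P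
    unfolding refines_def
  proof
    fix Q assume "Q \<in> ?\<rho>"
    then obtain b where b: "b \<in> B" "Q = E `` {b}" unfolding quotient_def by blast
    obtain C where C: "C \<in> P" "b \<in> C" using part_cover[OF P b(1)] by blast
    have PU: "P \<in> U" using P PT unfolding U_def by blast
    have "E `` {b} \<subseteq> C"
    proof
      fix b' assume "b' \<in> E `` {b}"
      then have "(b, b') \<in> E" by simp
      then obtain C' where "C' \<in> P" "b \<in> C'" "b' \<in> C'" using PU unfolding E_def by blast
      then show "b' \<in> C" using part_same[OF P C(1)] C by blast
    qed
    then show "\<exists>C\<in>P. Q \<subseteq> C" using C b by blast
  qed
  show ?thesis using part ref least by blast
qed


lemma offset_Suc: "offset ns (Suc i) = offset ns i + ns ! i"
  unfolding offset_def by simp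

lemma offset_mono: "i \<le> k \<Longrightarrow> offset ns i \<le> offset ns k"
  unfolding offset_def by (rule sum_mono2) auto

lemma offset_len: "offset ns (length ns) = sum_list ns"
  unfolding offset_def sum_list_sum_nth by (simp add: lessThan_atLeast0)

lemma pos_unique_aux:
  assumes "i < i'" "j < ns ! i" shows "offset ns i + j < offset ns i' + j'"
proof -
  have "offset ns (Suc i) \<le> offset ns i'" using assms offset_mono by simp
  then show ?thesis using assms offset_Suc[of ns i] by linarith
qed

lemma pos_unique:
  assumes "j < ns ! i" "j' < ns ! i'" "offset ns i + j = offset ns i' + j'"
  shows "i = i'"
  using pos_unique_aux[of i i' j ns j'] pos_unique_aux[of i' i j' ns j] assms
  by (metis less_irrefl linorder_neqE_nat)

lemma pos_exists_aux:
  "k \<le> length ns \<Longrightarrow> p < offset ns k \<Longrightarrow> \<exists>i<k. \<exists>j<ns ! i. p = offset ns i + j"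
proof (induction k)
  case 0 then show ?case by (simp add: offset_def)
next
  case (Suc k)
  show ?case
  proof (cases "p < offset ns k")
    case True
    have "k \<le> length ns" using Suc.prems by simp
    then obtain i j where "i < k" "j < ns ! i" "p = offset ns i + j" using Suc.IH True by blast
    then show ?thesis using less_SucI by blast
  next
    case False
    then have "p - offset ns k < ns ! k" "p = offset ns k + (p - offset ns k)"
      using Suc.prems offset_Suc[of ns k] by linarith+
    then show ?thesis by blast
  qed
qed

lemma pos_exists:
  "p < sum_list ns \<Longrightarrow> \<exists>i<length ns. \<exists>j<ns ! i. p = offset ns i + j"
  using pos_exists_aux[of "length ns" ns p] offset_len[of ns] by simp

definition rowof :: "nat list \<Rightarrow> nat \<Rightarrow> nat" where
  "rowof ns p = (THE i. i < length ns \<and> (\<exists>j<ns ! i. p = offset ns i + j))"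

definition colof :: "nat list \<Rightarrow> nat \<Rightarrow> nat" where
  "colof ns p = p - offset ns (rowof ns p)"

lemma rowof_eq: assumes "i < length ns" "j < ns ! i" shows "rowof ns (offset ns i + j) = i"
  unfolding rowof_def
proof (rule the_equality)
  show "i < length ns \<and> (\<exists>j'<ns ! i. offset ns i + j = offset ns i + j')" using assms by blast
  fix i' assume "i' < length ns \<and> (\<exists>j'<ns ! i'. offset ns i + j = offset ns i' + j')"
  then show "i' = i" using pos_unique assms by metis
qed

lemma colof_eq: assumes "i < length ns" "j < ns ! i" shows "colof ns (offset ns i + j) = j"
  unfolding colof_def using rowof_eq[OF assms] by simp

lemma rowof_props: assumes "p < sum_list ns"
  shows "rowof ns p < length ns" "colof ns p < ns ! rowof ns p" "p = offset ns (rowof ns p) + colof ns p"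
proof -
  obtain i j where ij: "i < length ns" "j < ns ! i" "p = offset ns i + j" using pos_exists[OF assms] by blast
  show "rowof ns p < length ns" "colof ns p < ns ! rowof ns p" "p = offset ns (rowof ns p) + colof ns p"
    using rowof_eq[OF ij(1,2)] colof_eq[OF ij(1,2)] ij by simp_all
qed

lemma offset_lt: assumes "i < length ns" "j < ns ! i" shows "offset ns i + j < sum_list ns"
proof -
  have "offset ns (Suc i) \<le> offset ns (length ns)" using assms offset_mono by simp
  then show ?thesis using assms offset_Suc[of ns i] offset_len[of ns] by linarith
qed

lemma rowof_surj: assumes "\<forall>i<length ns. 1 \<le> ns ! i"
  shows "rowof ns ` {..<sum_list ns} = {..<length ns}"
proof
  show "rowof ns ` {..<sum_list ns} \<subseteq> {..<length ns}" using rowof_props(1) by blast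
  show "{..<length ns} \<subseteq> rowof ns ` {..<sum_list ns}"
  proof
    fix i assume i: "i \<in> {..<length ns}"
    then have "0 < ns ! i" using assms by auto
    then have "rowof ns (offset ns i + 0) = i" "offset ns i + 0 < sum_list ns"
      using rowof_eq[of i ns 0] offset_lt[of i ns 0] i by auto
    then show "i \<in> rowof ns ` {..<sum_list ns}" by (metis add_0_right image_eqI lessThan_iff)
  qed
qed

lemma tilde_block:
  assumes "C \<subseteq> {..<length ns}"
  shows "{offset ns i + j | i j. i \<in> C \<and> j < ns ! i} = pull (rowof ns) {..<sum_list ns} C"
proof
  show "{offset ns i + j | i j. i \<in> C \<and> j < ns ! i} \<subseteq> pull (rowof ns) {..<sum_list ns} C"
  proof
    fix p assume "p \<in> {offset ns i + j | i j. i \<in> C \<and> j < ns ! i}"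
    then obtain i j where ij: "i \<in> C" "j < ns ! i" "p = offset ns i + j" by blast
    have "i < length ns" using ij assms by blast
    then show "p \<in> pull (rowof ns) {..<sum_list ns} C"
      unfolding pull_def using rowof_eq offset_lt ij by auto
  qed
  show "pull (rowof ns) {..<sum_list ns} C \<subseteq> {offset ns i + j | i j. i \<in> C \<and> j < ns ! i}"
  proof
    fix p assume "p \<in> pull (rowof ns) {..<sum_list ns} C"
    then have p: "p < sum_list ns" "rowof ns p \<in> C" unfolding pull_def by auto
    then show "p \<in> {offset ns i + j | i j. i \<in> C \<and> j < ns ! i}"
      using rowof_props[OF p(1)] by blast
  qed
qed

lemma tilde_eq:
  assumes "\<forall>C\<in>P. C \<subseteq> {..<length ns}"
  shows "tilde ns P = pullP (rowof ns) {..<sum_list ns} P"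
  unfolding tilde_def pullP_def using tilde_block assms by (metis (no_types, lifting) image_cong)

lemma concat_eq_aux:
  "k \<le> length ns \<Longrightarrow> concat (map (\<lambda>i. map (F i) [0..<ns ! i]) [0..<k])
     = map (\<lambda>p. F (rowof ns p) (colof ns p)) [0..<offset ns k]"
proof (induction k)
  case 0 then show ?case by (simp add: offset_def)
next
  case (Suc k)
  have k: "k < length ns" using Suc.prems by simp
  have "[0..<offset ns (Suc k)] = [0..<offset ns k] @ [offset ns k..<offset ns k + ns ! k]"
    unfolding offset_Suc by (rule upt_add_eq_append) simp
  moreover have "map (\<lambda>p. F (rowof ns p) (colof ns p)) [offset ns k..<offset ns k + ns ! k] = map (F k) [0..<ns ! k]"
  proof (rule nth_equalityI)
    show "length (map (\<lambda>p. F (rowof ns p) (colof ns p)) [offset ns k..<offset ns k + ns ! k]) = length (map (F k) [0..<ns ! k])" by simp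
    fix j assume "j < length (map (\<lambda>p. F (rowof ns p) (colof ns p)) [offset ns k..<offset ns k + ns ! k])"
    then have j: "j < ns ! k" by simp
    then show "map (\<lambda>p. F (rowof ns p) (colof ns p)) [offset ns k..<offset ns k + ns ! k] ! j = map (F k) [0..<ns ! k] ! j"
      using rowof_eq[OF k j] colof_eq[OF k j] by simp
  qed
  ultimately show ?case using Suc by simp
qed

lemma concat_eq:
  "concat (map (\<lambda>i. map (F i) [0..<ns ! i]) [0..<length ns])
     = map (\<lambda>p. F (rowof ns p) (colof ns p)) [0..<sum_list ns]"
  using concat_eq_aux[of "length ns" ns F] offset_len[of ns] by simp

lemma prod_list_concat: "prod_list (concat xss) = prod_list (map prod_list xss)"
  by (induction xss) auto


lemma bij_extend:
  fixes f :: "'a \<Rightarrow> 'a" and D :: "'a set"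
  assumes fin: "finite D" and inj: "inj_on f D"
  shows "\<exists>\<sigma>. bij \<sigma> \<and> (\<forall>x\<in>D. \<sigma> x = f x)"
proof -
  define D1 where "D1 = f ` D - D"
  define D2 where "D2 = D - f ` D"
  have cfD: "card (f ` D) = card D" using card_image[OF inj] .
  have "card D1 = card (f ` D) - card (f ` D \<inter> D)"
    unfolding D1_def using fin by (simp add: card_Diff_subset_Int)
  moreover have "card D2 = card D - card (D \<inter> f ` D)"
    unfolding D2_def using fin by (simp add: card_Diff_subset_Int)
  ultimately have "card D1 = card D2" using cfD by (simp add: Int_commute)
  moreover have "finite D1" "finite D2" unfolding D1_def D2_def using fin by auto
  ultimately obtain g where g: "bij_betw g D1 D2" using finite_same_card_bij by blast
  define \<sigma> where "\<sigma> x = (if x \<in> D then f x else if x \<in> D1 then g x else x)" for x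
  have gD2: "x \<in> D1 \<Longrightarrow> g x \<in> D2" for x using g bij_betwE by blast
  have ginj: "inj_on g D1" using g bij_betw_imp_inj_on by blast
  have inj\<sigma>: "inj \<sigma>"
  proof (rule injI)
    fix x y assume eq: "\<sigma> x = \<sigma> y"
    consider "x \<in> D" | "x \<notin> D" "x \<in> D1" | "x \<notin> D" "x \<notin> D1" by blast
    then show "x = y"
    proof cases
      case 1
      then have sx: "\<sigma> x \<in> f ` D" unfolding \<sigma>_def by simp
      consider "y \<in> D" | "y \<notin> D" "y \<in> D1" | "y \<notin> D" "y \<notin> D1" by blast
      then show ?thesis
      proof cases
        case 1 then show ?thesis using \<open>x \<in> D\<close> eq inj unfolding \<sigma>_def by (simp add: inj_on_def)
      next
        case 2 then have "\<sigma> y \<in> D2" using gD2 unfolding \<sigma>_def by simp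
        then show ?thesis using sx eq unfolding D2_def by simp
      next
        case 3 then have "\<sigma> y = y" "y \<notin> f ` D" unfolding \<sigma>_def D1_def by auto
        then show ?thesis using sx eq by simp
      qed
    next
      case 2
      then have sx: "\<sigma> x \<in> D2" using gD2 unfolding \<sigma>_def by simp
      consider "y \<in> D" | "y \<notin> D" "y \<in> D1" | "y \<notin> D" "y \<notin> D1" by blast
      then show ?thesis
      proof cases
        case 1 then have "\<sigma> y \<in> f ` D" unfolding \<sigma>_def by simp
        then show ?thesis using sx eq unfolding D2_def by simp
      next
        case 2 then show ?thesis using \<open>x \<notin> D\<close> \<open>x \<in> D1\<close> eq ginj unfolding \<sigma>_def by (simp add: inj_on_def)
      next
        case 3 then have "\<sigma> y = y" unfolding \<sigma>_def by auto
        then show ?thesis using sx eq \<open>y \<notin> D\<close> unfolding D2_def by simp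
      qed
    next
      case 3
      then have sx: "\<sigma> x = x" "x \<notin> f ` D" unfolding \<sigma>_def D1_def by auto
      consider "y \<in> D" | "y \<notin> D" "y \<in> D1" | "y \<notin> D" "y \<notin> D1" by blast
      then show ?thesis
      proof cases
        case 1 then have "\<sigma> y \<in> f ` D" unfolding \<sigma>_def by simp
        then show ?thesis using sx eq by simp
      next
        case 2 then have "\<sigma> y \<in> D2" using gD2 unfolding \<sigma>_def by simp
        then show ?thesis using sx eq \<open>x \<notin> D\<close> unfolding D2_def by simp
      next
        case 3 then have "\<sigma> y = y" unfolding \<sigma>_def by auto
        then show ?thesis using sx eq by simp
      qed
    qed
  qed
  have surj\<sigma>: "surj \<sigma>"
  proof (rule surjI[where f = "\<lambda>z. if z \<in> f ` D then inv_into D f z else if z \<in> D2 then inv_into D1 g z else z"])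
    fix z
    show "\<sigma> (if z \<in> f ` D then inv_into D f z else if z \<in> D2 then inv_into D1 g z else z) = z"
    proof (cases "z \<in> f ` D")
      case True
      then show ?thesis unfolding \<sigma>_def by (simp add: inv_into_into f_inv_into_f)
    next
      case False
      show ?thesis
      proof (cases "z \<in> D2")
        case True
        have zi: "inv_into D1 g z \<in> D1" "g (inv_into D1 g z) = z"
          using True g by (auto simp: bij_betw_def inv_into_into f_inv_into_f)
        then have "inv_into D1 g z \<notin> D" unfolding D1_def by simp
        then show ?thesis using False True zi unfolding \<sigma>_def by simp
      next
        case F2: False
        then have "z \<notin> D" using False unfolding D2_def by simp
        moreover have "z \<notin> D1" using False unfolding D1_def by simp
        ultimately show ?thesis using False F2 unfolding \<sigma>_def by simp
      qed
    qed
  qed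
  have "bij \<sigma>" using inj\<sigma> surj\<sigma> by (simp add: bij_def)
  moreover have "\<forall>x\<in>D. \<sigma> x = f x" unfolding \<sigma>_def by simp
  ultimately show ?thesis by blast
qed

lemma map2_same: "map2 f (map g xs) (map h xs) = map (\<lambda>x. f (g x) (h x)) xs"
  by (induction xs) auto

lemma iota_prod_list:
  assumes "exch_system sclA phi sclU phiU iota"
  shows "iota k (prod_list xs) = prod_list (map (iota k) xs)"
  by (induction xs) (simp_all add: exch_system.iota_mult[OF assms] exch_system.iota_one[OF assms])


lemma phi_tilde:
  assumes ex: "exch_system sclA phi sclU phiU iota"
    and pos: "\<forall>i<length ns. 1 \<le> ns ! i"
    and P: "P \<in> partitions (length ns)"
  shows "phi_part phiU iota (pullP (rowof ns) {..<sum_list ns} P) (concat (map (\<lambda>i. map (X i) [0..<ns ! i]) [0..<length ns]))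
       = phi_part phiU iota P (map (\<lambda>i. prod_list (map (X i) [0..<ns ! i])) [0..<length ns])"
proof -
  let ?m = "length ns" and ?n = "sum_list ns" and ?r = "rowof ns" and ?c = "colof ns"
  let ?A = "{..<sum_list ns}"
  let ?Xs = "concat (map (\<lambda>i. map (X i) [0..<ns ! i]) [0..<length ns])"
  let ?Ys = "map (\<lambda>i. prod_list (map (X i) [0..<ns ! i])) [0..<length ns]"
  have Xs_eq: "?Xs = map (\<lambda>p. X (?r p) (?c p)) [0..<?n]" by (rule concat_eq)
  have surj: "?r ` ?A = {..<?m}" using rowof_surj[OF pos] .
  have Pp: "partition_on {..<?m} P" using P unfolding partitions_def by simp
  have PP: "partition_on ?A (pullP ?r ?A P)" using partition_pull[OF Pp surj] .
  define L2 where "L2 i = Min (blk P i)" for i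
  define fm where "fm x = Min (pull ?r ?A (blk P x))" for x
  have blkfin: "finite (blk P i)" "blk P i \<noteq> {}" "blk P i \<in> P" "i \<in> blk P i" if "i < ?m" for i
  proof -
    show bm: "blk P i \<in> P" "i \<in> blk P i" using blk_mem[OF Pp] that by auto
    show "finite (blk P i)" using part_sub[OF Pp bm(1)] finite_subset by blast
    show "blk P i \<noteq> {}" using bm by blast
  qed
  have blkmin: "blk P (L2 i) = blk P i" if "i < ?m" for i
  proof -
    have "L2 i \<in> blk P i" unfolding L2_def using blkfin[OF that] by (simp add: Min_in)
    then show ?thesis using blk_eq[OF Pp blkfin(3)[OF that]] by simp
  qed
  have pullne: "finite (pull ?r ?A C) \<and> pull ?r ?A C \<noteq> {}" if C: "C \<in> P" for C
  proof -
    have "pull ?r ?A C \<in> pullP ?r ?A P" using C unfolding pullP_def by blast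
    then show ?thesis using part_ne[OF PP] unfolding pull_def by auto
  qed
  have inj: "inj_on fm (L2 ` {..<?m})"
  proof (rule inj_onI)
    fix x y assume x: "x \<in> L2 ` {..<?m}" and y: "y \<in> L2 ` {..<?m}" and eq: "fm x = fm y"
    obtain i where i: "i < ?m" "x = L2 i" using x by blast
    obtain i' where i': "i' < ?m" "y = L2 i'" using y by blast
    have e: "Min (pull ?r ?A (blk P i)) = Min (pull ?r ?A (blk P i'))"
      using eq unfolding fm_def i i' blkmin[OF i(1)] blkmin[OF i'(1)] .
    let ?z = "Min (pull ?r ?A (blk P i))"
    have "?z \<in> pull ?r ?A (blk P i)" using pullne[OF blkfin(3)[OF i(1)]] by (simp add: Min_in)
    moreover have "?z \<in> pull ?r ?A (blk P i')" unfolding e using pullne[OF blkfin(3)[OF i'(1)]] by (simp add: Min_in)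
    ultimately have "?r ?z \<in> blk P i" "?r ?z \<in> blk P i'" unfolding pull_def by auto
    then have "blk P i = blk P i'" using part_same[OF Pp blkfin(3)[OF i(1)] blkfin(3)[OF i'(1)]] by blast
    then show "x = y" using i i' unfolding L2_def by simp
  qed
  obtain \<sigma> where \<sigma>: "bij \<sigma>" "\<forall>x\<in>L2 ` {..<?m}. \<sigma> x = fm x"
    using bij_extend[OF _ inj] by blast
  have L1: "Min (blk (pullP ?r ?A P) p) = \<sigma> (L2 (?r p))" if p: "p < ?n" for p
  proof -
    have rp: "?r p < ?m" using rowof_props(1)[OF p] .
    have "pull ?r ?A (blk P (?r p)) \<in> pullP ?r ?A P" using blkfin(3)[OF rp] unfolding pullP_def by blast
    moreover have "p \<in> pull ?r ?A (blk P (?r p))" using p blkfin(4)[OF rp] unfolding pull_def by simp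
    ultimately have "blk (pullP ?r ?A P) p = pull ?r ?A (blk P (?r p))" using blk_eq[OF PP] by blast
    moreover have "\<sigma> (L2 (?r p)) = Min (pull ?r ?A (blk P (?r p)))"
    proof -
      have "\<sigma> (L2 (?r p)) = fm (L2 (?r p))" using \<sigma>(2) rp by simp
      also have "\<dots> = Min (pull ?r ?A (blk P (?r p)))" unfolding fm_def using blkmin[OF rp] by simp
      finally show ?thesis .
    qed
    ultimately show ?thesis by simp
  qed
  have lenXs: "length ?Xs = ?n" unfolding Xs_eq by simp
  have "phi_part phiU iota (pullP ?r ?A P) ?Xs
      = phiU (prod_list (map (\<lambda>j. iota (Min (blk (pullP ?r ?A P) j)) (?Xs ! j)) [0..<?n]))"
    unfolding phi_part_def blk_def lenXs ..
  also have "\<dots> = phiU (prod_list (map (\<lambda>p. iota (\<sigma> (L2 (?r p))) (X (?r p) (?c p))) [0..<?n]))"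
    using L1 unfolding Xs_eq by (intro arg_cong[where f = phiU] arg_cong[where f = prod_list] map_cong) auto
  also have "\<dots> = phiU (prod_list (map2 (\<lambda>x i. iota (\<sigma> i) x) (map (\<lambda>p. X (?r p) (?c p)) [0..<?n]) (map (\<lambda>p. L2 (?r p)) [0..<?n])))"
    by (simp add: map2_same)
  also have "\<dots> = phiU (prod_list (map2 (\<lambda>x i. iota i x) (map (\<lambda>p. X (?r p) (?c p)) [0..<?n]) (map (\<lambda>p. L2 (?r p)) [0..<?n])))"
    using exch_system.exchangeable[OF ex, of "map (\<lambda>p. L2 (?r p)) [0..<?n]" "map (\<lambda>p. X (?r p) (?c p)) [0..<?n]" \<sigma>] \<sigma>(1)
    by simp
  also have "\<dots> = phiU (prod_list (map (\<lambda>p. iota (L2 (?r p)) (X (?r p) (?c p))) [0..<?n]))"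
    by (simp add: map2_same)
  also have "\<dots> = phiU (prod_list (concat (map (\<lambda>i. map (\<lambda>j. iota (L2 i) (X i j)) [0..<ns ! i]) [0..<?m])))"
    using concat_eq[of "\<lambda>i j. iota (L2 i) (X i j)" ns] by simp
  also have "\<dots> = phiU (prod_list (map (\<lambda>i. prod_list (map (\<lambda>j. iota (L2 i) (X i j)) [0..<ns ! i])) [0..<?m]))"
    by (simp add: prod_list_concat o_def)
  also have "\<dots> = phiU (prod_list (map (\<lambda>i. iota (L2 i) (?Ys ! i)) [0..<?m]))"
    by (intro arg_cong[where f = phiU] arg_cong[where f = prod_list] map_cong)
       (auto simp: iota_prod_list[OF ex] o_def)
  also have "\<dots> = phi_part phiU iota P ?Ys"
    unfolding phi_part_def blk_def L2_def by simp
  finally show ?thesis .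
qed

theorem proposition3p3:
  fixes sclA :: "complex \<Rightarrow> 'a::ring_1 \<Rightarrow> 'a" and phi :: "'a \<Rightarrow> complex"
    and sclU :: "complex \<Rightarrow> 'u::ring_1 \<Rightarrow> 'u" and phiU :: "'u \<Rightarrow> complex"
    and iota :: "nat \<Rightarrow> 'a \<Rightarrow> 'u"
    and X :: "nat \<Rightarrow> nat \<Rightarrow> 'a" and ns :: "nat list"
  assumes "exch_system sclA phi sclU phiU iota"
    and "ns \<noteq> []"
    and "\<forall>i<length ns. 1 \<le> ns ! i"
  shows "cum phiU iota (map (\<lambda>i. prod_list (map (X i) [0..<ns ! i])) [0..<length ns])
       = (\<Sum>\<sigma>\<in>{\<sigma>\<in>partitions (sum_list ns). indecomposable ns \<sigma>}.
            cum_part phiU iota \<sigma> (concat (map (\<lambda>i. map (X i) [0..<ns ! i]) [0..<length ns])))"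

proof -
  note ex = assms(1) and pos = assms(3)
  let ?m = "length ns" and ?n = "sum_list ns" and ?r = "rowof ns"
  let ?A = "{..<sum_list ns}" and ?B = "{..<length ns}"
  let ?Xs = "concat (map (\<lambda>i. map (X i) [0..<ns ! i]) [0..<length ns])"
  let ?Ys = "map (\<lambda>i. prod_list (map (X i) [0..<ns ! i])) [0..<length ns]"
  have lenXs: "length ?Xs = ?n" unfolding concat_eq by simp
  have lenYs: "length ?Ys = ?m" by simp
  have surj: "?r ` ?A = ?B" using rowof_surj[OF pos] .
  have Bne: "?B \<noteq> {}" using assms(2) by (simp add: lessThan_empty_iff)
  have h1part: "partition_on ?B (hat1 ?m)" unfolding hat1_def using partition_on_space[OF Bne] .
  have h0part: "partition_on ?B (hat0 ?m)" unfolding hat0_def by (rule partition_on_singletons)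
  have tilde0: "tilde ns (hat0 ?m) = pullP ?r ?A (hat0 ?m)"
    by (rule tilde_eq) (use part_sub[OF h0part] in blast)
  have tilde1: "tilde ns (hat1 ?m) = pullP ?r ?A (hat1 ?m)"
    by (rule tilde_eq) (use part_sub[OF h1part] in blast)
  define rho where "rho \<tau> = (SOME \<rho>. partition_on ?B \<rho> \<and> refines \<tau> (pullP ?r ?A \<rho>) \<and>
    (\<forall>P. partition_on ?B P \<and> refines \<tau> (pullP ?r ?A P) \<longrightarrow> refines \<rho> P))" for \<tau>
  have rho: "partition_on ?B (rho \<tau>) \<and> refines \<tau> (pullP ?r ?A (rho \<tau>)) \<and>
    (\<forall>P. partition_on ?B P \<and> refines \<tau> (pullP ?r ?A P) \<longrightarrow> refines (rho \<tau>) P)"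
    if "\<tau> \<in> partitions ?n" for \<tau>
  proof -
    have "partition_on ?A \<tau>" using that unfolding partitions_def by simp
    from pull_meet[OF this surj] show ?thesis unfolding rho_def by (rule someI_ex)
  qed
  have rho_iff: "refines (rho \<tau>) P \<longleftrightarrow> refines \<tau> (pullP ?r ?A P)"
    if \<tau>: "\<tau> \<in> partitions ?n" and P: "partition_on ?B P" for \<tau> P
  proof
    assume "refines (rho \<tau>) P"
    then have "refines (pullP ?r ?A (rho \<tau>)) (pullP ?r ?A P)"
      using refines_pull_iff[OF conjunct1[OF rho[OF \<tau>]] surj] by simp
    then show "refines \<tau> (pullP ?r ?A P)" using rho[OF \<tau>] refines_trans' by blast
  next
    assume "refines \<tau> (pullP ?r ?A P)"
    then show "refines (rho \<tau>) P" using rho[OF \<tau>] P by blast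
  qed
  have join: "join_part ?n \<tau> (pullP ?r ?A (hat0 ?m)) = pullP ?r ?A (rho \<tau>)"
    if \<tau>: "\<tau> \<in> partitions ?n" for \<tau>
  proof -
    have rp: "partition_on ?B (rho \<tau>)" using rho[OF \<tau>] by blast
    have mem: "pullP ?r ?A (rho \<tau>) \<in> partitions ?n"
      using partition_pull[OF rp surj] unfolding partitions_def by simp
    have r1: "refines \<tau> (pullP ?r ?A (rho \<tau>))" using rho[OF \<tau>] by blast
    have "refines (hat0 ?m) (rho \<tau>)" unfolding refines_def hat0_def
    proof
      fix S assume "S \<in> (\<lambda>i. {i}) ` ?B"
      then obtain i where i: "i \<in> ?B" "S = {i}" by blast
      then obtain C where "C \<in> rho \<tau>" "i \<in> C" using part_cover[OF rp] by blast
      then show "\<exists>C\<in>rho \<tau>. S \<subseteq> C" using i by blast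
    qed
    then have r2: "refines (pullP ?r ?A (hat0 ?m)) (pullP ?r ?A (rho \<tau>))"
      using refines_pull_iff[OF h0part surj] by simp
    have r3: "refines (pullP ?r ?A (rho \<tau>)) \<theta>"
      if \<theta>: "\<theta> \<in> partitions ?n" "refines \<tau> \<theta>" "refines (pullP ?r ?A (hat0 ?m)) \<theta>" for \<theta>
    proof -
      have tp: "partition_on ?A \<theta>" using \<theta>(1) unfolding partitions_def by simp
      obtain P where P: "partition_on ?B P" "\<theta> = pullP ?r ?A P"
        using pull_surj[OF tp surj] \<theta>(3) unfolding hat0_def by blast
      have "refines (rho \<tau>) P" using rho_iff[OF \<tau> P(1)] \<theta>(2) P(2) by simp
      then show ?thesis using refines_pull_iff[OF rp surj] P(2) by simp
    qed
    show ?thesis unfolding join_part_def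
    proof (rule the_equality)
      show "pullP ?r ?A (rho \<tau>) \<in> partitions ?n \<and> refines \<tau> (pullP ?r ?A (rho \<tau>)) \<and>
        refines (pullP ?r ?A (hat0 ?m)) (pullP ?r ?A (rho \<tau>)) \<and>
        (\<forall>\<theta>\<in>partitions ?n. refines \<tau> \<theta> \<and> refines (pullP ?r ?A (hat0 ?m)) \<theta> \<longrightarrow> refines (pullP ?r ?A (rho \<tau>)) \<theta>)"
        using mem r1 r2 r3 by blast
      fix \<rho>' assume H: "\<rho>' \<in> partitions ?n \<and> refines \<tau> \<rho>' \<and> refines (pullP ?r ?A (hat0 ?m)) \<rho>' \<and>
        (\<forall>\<theta>\<in>partitions ?n. refines \<tau> \<theta> \<and> refines (pullP ?r ?A (hat0 ?m)) \<theta> \<longrightarrow> refines \<rho>' \<theta>)"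
      then have a: "refines \<rho>' (pullP ?r ?A (rho \<tau>))" using mem r1 r2 by blast
      have b: "refines (pullP ?r ?A (rho \<tau>)) \<rho>'" using r3 H by blast
      show "\<rho>' = pullP ?r ?A (rho \<tau>)"
        using refines_antisym[OF _ _ a b] H mem unfolding partitions_def by blast
    qed
  qed
  have indec: "indecomposable ns \<tau> \<longleftrightarrow> rho \<tau> = hat1 ?m" if \<tau>: "\<tau> \<in> partitions ?n" for \<tau>
  proof -
    have rp: "partition_on ?B (rho \<tau>)" using rho[OF \<tau>] by blast
    have "indecomposable ns \<tau> \<longleftrightarrow> pullP ?r ?A (rho \<tau>) = pullP ?r ?A (hat1 ?m)"
      unfolding indecomposable_def tilde0 tilde1 join[OF \<tau>] ..
    also have "\<dots> \<longleftrightarrow> rho \<tau> = hat1 ?m" using pullP_inj[OF rp h1part surj] by auto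
    finally show ?thesis .
  qed
  define g where "g \<rho> = (\<Sum>\<tau>\<in>{\<tau>\<in>partitions ?n. rho \<tau> = \<rho>}. cum_part phiU iota \<tau> ?Xs)" for \<rho>
  have key: "\<forall>p\<in>partitions ?m. (\<Sum>s\<in>{s\<in>partitions ?m. refines s p}. g s)
       = (\<Sum>s\<in>{s\<in>partitions ?m. refines s p}. cum_part phiU iota s ?Ys)"
  proof
    fix p assume p: "p \<in> partitions ?m"
    have pp: "partition_on ?B p" using p unfolding partitions_def by simp
    let ?T = "{s\<in>partitions ?m. refines s p}"
    let ?S = "{\<tau>\<in>partitions ?n. refines (rho \<tau>) p}"
    have finS: "finite ?S" using finite_partitions by simp
    have finT: "finite ?T" using finite_partitions by simp
    have img: "rho ` ?S \<subseteq> ?T" using rho unfolding partitions_def by auto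
    have "(\<Sum>s\<in>?T. g s) = (\<Sum>s\<in>?T. \<Sum>\<tau>\<in>{\<tau>\<in>?S. rho \<tau> = s}. cum_part phiU iota \<tau> ?Xs)"
      unfolding g_def by (intro sum.cong refl) auto
    also have "\<dots> = (\<Sum>\<tau>\<in>?S. cum_part phiU iota \<tau> ?Xs)"
      by (rule sum.group[OF finS finT img])
    also have "?S = {\<tau>\<in>partitions ?n. refines \<tau> (pullP ?r ?A p)}"
      using rho_iff[OF _ pp] by blast
    also have "(\<Sum>\<tau>\<in>{\<tau>\<in>partitions ?n. refines \<tau> (pullP ?r ?A p)}. cum_part phiU iota \<tau> ?Xs)
        = phi_part phiU iota (pullP ?r ?A p) ?Xs"
    proof -
      have "pullP ?r ?A p \<in> partitions (length ?Xs)"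
        using partition_pull[OF pp surj] lenXs unfolding partitions_def by simp
      from cum_zeta[OF this, of phiU iota] show ?thesis unfolding lenXs .
    qed
    also have "\<dots> = phi_part phiU iota p ?Ys" using phi_tilde[OF ex pos p] .
    also have "\<dots> = (\<Sum>s\<in>?T. cum_part phiU iota s ?Ys)"
    proof -
      have "p \<in> partitions (length ?Ys)" using p lenYs by simp
      from cum_zeta[OF this, of phiU iota] show ?thesis unfolding lenYs by simp
    qed
    finally show "(\<Sum>s\<in>?T. g s) = (\<Sum>s\<in>?T. cum_part phiU iota s ?Ys)" .
  qed
  have h1: "hat1 ?m \<in> partitions ?m" using h1part unfolding partitions_def by simp
  have "g (hat1 ?m) = cum_part phiU iota (hat1 ?m) ?Ys"
    using zeta_unique[OF porder_partitions key h1] .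
  moreover have "{\<sigma>\<in>partitions ?n. indecomposable ns \<sigma>} = {\<tau>\<in>partitions ?n. rho \<tau> = hat1 ?m}"
    using indec by blast
  ultimately show ?thesis unfolding cum_def g_def lenYs by simp
qed

end
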